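(* Let $H$ be a finite simple graph on vertex set $\{x_1,\dots,x_n\}$ ($n\ge 1$) and let $G=w(H)$ be its whiskered graph, a graph on $2n$ vertices. Then the independence complex $\operatorname{Ind}(G)$ is a pseudo-manifold (of dimension $n-1$). Moreover, if $|E(G)|\ge n+1$ (equivalently, $H$ has at least one edge), then $\operatorname{Ind}(G)$ is a pseudo-manifold with boundary.
   Context: All graphs are finite and simple. For a graph $H$ with vertex set $\{x_1,\dots,x_n\}$, the whiskered graph $w(H)$ has vertex set $\{x_1,\dots,x_n,y_1,\dots,y_n\}$ and edge set $E(H)\cup\{\{x_i,y_i\}: i=1,\dots,n\}$; a graph is called whiskered if it equals $w(H)$ for some graph $H$. A subset $W$ of the vertex set of a graph is independent if no edge has both endpoints in $W$; the independence complex $\operatorname{Ind}(G)$ is the simplicial complex whose faces are the independent sets of $G$. A face $F$ has dimension $|F|-1$; facets are maximal faces; a complex is pure if all facets have the same dimension. A $d$-dimensional simplicial complex $\Delta$ is a pseudo-manifold if (1) $\Delta$ is pure; (2) every $(d-1)$-dimensional face is contained in at most two facets; (3) for any two facets $F,F'$ there is a sequence of facets $F=G_0,G_1,\dots,G_t=F'$ with $\dim(G_i\cap G_{i+1})=d-1$ for all $i$. A pseudo-manifold has boundary if at least one $(d-1)$-dimensional face is contained in exactly one facet. *)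

theory Defs
  imports Main
begin

definition simple_graph :: "'a set \<Rightarrow> 'a set set \<Rightarrow> bool" where
  "simple_graph V E \<longleftrightarrow> finite V \<and>
     (\<forall>e\<in>E. \<exists>x y. x \<noteq> y \<and> x \<in> V \<and> y \<in> V \<and> e = {x, y})"

text \<open>Whiskered graph w(H): vertex x_i is Inl x, whisker vertex y_i is Inr x.\<close>
definition whisker_vertices :: "'a set \<Rightarrow> ('a + 'a) set" where
  "whisker_vertices V = Inl ` V \<union> Inr ` V"

definition whisker_edges :: "'a set \<Rightarrow> 'a set set \<Rightarrow> ('a + 'a) set set" where
  "whisker_edges V E = (\<lambda>e. Inl ` e) ` E \<union> (\<lambda>x. {Inl x, Inr x}) ` V"

definition independent_set :: "'b set \<Rightarrow> 'b set set \<Rightarrow> 'b set \<Rightarrow> bool" where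
  "independent_set V E W \<longleftrightarrow> W \<subseteq> V \<and> (\<forall>e\<in>E. \<not> e \<subseteq> W)"

definition Ind :: "'b set \<Rightarrow> 'b set set \<Rightarrow> 'b set set" where
  "Ind V E = {W. independent_set V E W}"

definition face_dim :: "'b set \<Rightarrow> int" where
  "face_dim F = int (card F) - 1"

definition complex_dim :: "'b set set \<Rightarrow> int" where
  "complex_dim \<Delta> = Max (face_dim ` \<Delta>)"

definition facets :: "'b set set \<Rightarrow> 'b set set" where
  "facets \<Delta> = {F \<in> \<Delta>. \<forall>G\<in>\<Delta>. F \<subseteq> G \<longrightarrow> G = F}"

definition pure_complex :: "'b set set \<Rightarrow> bool" where
  "pure_complex \<Delta> \<longleftrightarrow> (\<forall>F\<in>facets \<Delta>. \<forall>G\<in>facets \<Delta>. face_dim F = face_dim G)"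

definition pseudo_manifold :: "'b set set \<Rightarrow> bool" where
  "pseudo_manifold \<Delta> \<longleftrightarrow> (let d = complex_dim \<Delta> in
     pure_complex \<Delta> \<and>
     (\<forall>\<sigma>\<in>\<Delta>. face_dim \<sigma> = d - 1 \<longrightarrow> card {F \<in> facets \<Delta>. \<sigma> \<subseteq> F} \<le> 2) \<and>
     (\<forall>F\<in>facets \<Delta>. \<forall>F'\<in>facets \<Delta>. \<exists>gs. gs \<noteq> [] \<and> hd gs = F \<and> last gs = F' \<and>
        set gs \<subseteq> facets \<Delta> \<and>
        (\<forall>i. Suc i < length gs \<longrightarrow> face_dim (gs ! i \<inter> gs ! Suc i) = d - 1)))"

definition pseudo_manifold_with_boundary :: "'b set set \<Rightarrow> bool" where
  "pseudo_manifold_with_boundary \<Delta> \<longleftrightarrow> pseudo_manifold \<Delta> \<and>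
     (\<exists>\<sigma>\<in>\<Delta>. face_dim \<sigma> = complex_dim \<Delta> - 1 \<and> card {F \<in> facets \<Delta>. \<sigma> \<subseteq> F} = 1)"

end

theory Submission
  imports Defs
begin

lemma chain_from_rtranclp:
  assumes "Q\<^sup>*\<^sup>* a c" "c \<in> S" "\<And>x y. Q x y \<Longrightarrow> x \<in> S \<and> y \<in> S \<and> P x y"
  shows "\<exists>gs. gs \<noteq> [] \<and> hd gs = a \<and> last gs = c \<and> set gs \<subseteq> S \<and>
           (\<forall>i. Suc i < length gs \<longrightarrow> P (gs ! i) (gs ! Suc i))"
  using assms(1)
proof (induction rule: converse_rtranclp_induct)
  case base
  then show ?case using assms(2) by (intro exI[of _ "[c]"]) auto
next
  case (step y z)
  then obtain gs where gs: "gs \<noteq> []" "hd gs = z" "last gs = c" "set gs \<subseteq> S"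
    "\<forall>i. Suc i < length gs \<longrightarrow> P (gs ! i) (gs ! Suc i)" by blast
  have "\<forall>i. Suc i < length (y # gs) \<longrightarrow> P ((y#gs) ! i) ((y#gs) ! Suc i)"
  proof (intro allI impI)
    fix i assume "Suc i < length (y # gs)"
    then show "P ((y#gs) ! i) ((y#gs) ! Suc i)"
      using gs step.hyps(1) assms(3)[of y z]
      by (cases i) (auto simp: hd_conv_nth)
  qed
  then show ?case using gs step.hyps(1) assms(3)[of y z] by (intro exI[of _ "y # gs"]) auto
qed

lemma rtranclp_sym:
  assumes "\<And>x y. Q x y \<Longrightarrow> Q y x" "Q\<^sup>*\<^sup>* a b" shows "Q\<^sup>*\<^sup>* b a"
  using assms(2) by induction (auto intro: converse_rtranclp_into_rtranclp assms(1))

context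
  fixes V :: "'a set" and E :: "'a set set"
  assumes sg: "simple_graph V E"
begin

lemma finV: "finite V" using sg by (simp add: simple_graph_def)

lemma edge: "e \<in> E \<Longrightarrow> \<exists>x y. x \<noteq> y \<and> x \<in> V \<and> y \<in> V \<and> e = {x, y}"
  using sg by (simp add: simple_graph_def)

lemma indep_iff:
  "S \<in> Ind (whisker_vertices V) (whisker_edges V E) \<longleftrightarrow>
     S \<subseteq> Inl ` V \<union> Inr ` V \<and> (\<forall>x. \<not>(Inl x \<in> S \<and> Inr x \<in> S)) \<and> (\<forall>e\<in>E. \<not> Inl ` e \<subseteq> S)"
proof -
  have "S \<in> Ind (whisker_vertices V) (whisker_edges V E) \<longleftrightarrow>
     S \<subseteq> Inl ` V \<union> Inr ` V \<and> (\<forall>x\<in>V. \<not>(Inl x \<in> S \<and> Inr x \<in> S)) \<and> (\<forall>e\<in>E. \<not> Inl ` e \<subseteq> S)"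
    unfolding Ind_def independent_set_def whisker_vertices_def whisker_edges_def
    by (simp add: ball_Un conj_commute)
  moreover have "S \<subseteq> Inl ` V \<union> Inr ` V \<Longrightarrow> (\<forall>x\<in>V. \<not>(Inl x \<in> S \<and> Inr x \<in> S)) \<longleftrightarrow> (\<forall>x. \<not>(Inl x \<in> S \<and> Inr x \<in> S))"
    by blast
  ultimately show ?thesis by blast
qed

lemma insert_Inr_indep:
  assumes "S \<in> Ind (whisker_vertices V) (whisker_edges V E)" "x \<in> V" "Inl x \<notin> S"
  shows "insert (Inr x) S \<in> Ind (whisker_vertices V) (whisker_edges V E)"
proof -
  have S: "S \<subseteq> Inl ` V \<union> Inr ` V" "\<forall>x. \<not>(Inl x \<in> S \<and> Inr x \<in> S)" "\<forall>e\<in>E. \<not> Inl ` e \<subseteq> S"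
    using assms(1) indep_iff by blast+
  have "\<forall>e\<in>E. \<not> Inl ` e \<subseteq> insert (Inr x) S"
  proof (intro ballI notI)
    fix e assume "e \<in> E" "Inl ` e \<subseteq> insert (Inr x) S"
    then have "Inl ` e \<subseteq> S" by auto
    then show False using S(3) \<open>e \<in> E\<close> by blast
  qed
  moreover have "insert (Inr x) S \<subseteq> Inl ` V \<union> Inr ` V" using S(1) assms(2) by blast
  moreover have "\<forall>y. \<not>(Inl y \<in> insert (Inr x) S \<and> Inr y \<in> insert (Inr x) S)"
    using S(2) assms(3) by auto
  ultimately show ?thesis using indep_iff by blast
qed

lemma facet_iff:
  "S \<in> facets (Ind (whisker_vertices V) (whisker_edges V E)) \<longleftrightarrow>
     S \<in> Ind (whisker_vertices V) (whisker_edges V E) \<and> (\<forall>x\<in>V. Inl x \<in> S \<or> Inr x \<in> S)"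
proof
  assume f: "S \<in> facets (Ind (whisker_vertices V) (whisker_edges V E))"
  then have S: "S \<in> Ind (whisker_vertices V) (whisker_edges V E)" by (simp add: facets_def)
  moreover have "\<forall>x\<in>V. Inl x \<in> S \<or> Inr x \<in> S"
  proof (rule ccontr)
    assume "\<not> ?thesis"
    then obtain x where x: "x \<in> V" "Inl x \<notin> S" "Inr x \<notin> S" by blast
    have "insert (Inr x) S \<in> Ind (whisker_vertices V) (whisker_edges V E)"
      using insert_Inr_indep S x by blast
    then have "insert (Inr x) S = S" using f unfolding facets_def by blast
    then show False using x by blast
  qed
  ultimately show "S \<in> Ind (whisker_vertices V) (whisker_edges V E) \<and> (\<forall>x\<in>V. Inl x \<in> S \<or> Inr x \<in> S)" by blast
next
  assume a: "S \<in> Ind (whisker_vertices V) (whisker_edges V E) \<and> (\<forall>x\<in>V. Inl x \<in> S \<or> Inr x \<in> S)"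
  show "S \<in> facets (Ind (whisker_vertices V) (whisker_edges V E))"
    unfolding facets_def
  proof (safe)
    show "S \<in> Ind (whisker_vertices V) (whisker_edges V E)" using a by blast
  next
    fix G z assume G: "G \<in> Ind (whisker_vertices V) (whisker_edges V E)" "S \<subseteq> G" "z \<in> G"
    have Gs: "G \<subseteq> Inl ` V \<union> Inr ` V" "\<forall>x. \<not>(Inl x \<in> G \<and> Inr x \<in> G)"
      using G(1) indep_iff by blast+
    then obtain y where y: "y \<in> V" "z = Inl y \<or> z = Inr y" using G(3) by blast
    then have "Inl y \<in> S \<or> Inr y \<in> S" using a by blast
    then show "z \<in> S" using y Gs(2) G(2,3) by blast
  qed
qed

definition pr :: "'a + 'a \<Rightarrow> 'a" where "pr = case_sum id id"

lemma face_inj: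
  assumes "S \<in> Ind (whisker_vertices V) (whisker_edges V E)"
  shows "inj_on pr S" "pr ` S \<subseteq> V"
proof -
  have S: "S \<subseteq> Inl ` V \<union> Inr ` V" "\<forall>x. \<not>(Inl x \<in> S \<and> Inr x \<in> S)"
    using assms unfolding indep_iff by blast+
  show "inj_on pr S"
  proof (rule inj_onI)
    fix u v assume "u \<in> S" "v \<in> S" "pr u = pr v"
    then show "u = v" using S(2) by (cases u; cases v) (auto simp: pr_def)
  qed
  show "pr ` S \<subseteq> V" using S(1) by (auto simp: pr_def)
qed

lemma face_card: "S \<in> Ind (whisker_vertices V) (whisker_edges V E) \<Longrightarrow> card S \<le> card V"
  using face_inj card_inj_on_le finV by metis

lemma facet_card:
  assumes "S \<in> facets (Ind (whisker_vertices V) (whisker_edges V E))"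
  shows "card S = card V"
proof -
  have S: "S \<in> Ind (whisker_vertices V) (whisker_edges V E)" "\<forall>x\<in>V. Inl x \<in> S \<or> Inr x \<in> S"
    using assms facet_iff by blast+
  have "pr ` S = V"
  proof
    show "pr ` S \<subseteq> V" using face_inj S by blast
    show "V \<subseteq> pr ` S"
    proof
      fix x assume "x \<in> V"
      then have "Inl x \<in> S \<or> Inr x \<in> S" using S by blast
      then show "x \<in> pr ` S" by (elim disjE) (rule rev_image_eqI, assumption, simp add: pr_def)+
    qed
  qed
  then show ?thesis using face_inj(1)[OF S(1)] card_image by metis
qed

lemma all_inr_facet: "Inr ` V \<in> facets (Ind (whisker_vertices V) (whisker_edges V E))"
proof -
  have "\<forall>e\<in>E. \<not> Inl ` e \<subseteq> Inr ` V"
  proof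
    fix e assume "e \<in> E"
    then obtain x y where "x \<noteq> y" "e = {x,y}" using edge by blast
    then show "\<not> Inl ` e \<subseteq> Inr ` V" by auto
  qed
  then show ?thesis unfolding facet_iff indep_iff by blast
qed

lemma finite_Ind: "finite (Ind (whisker_vertices V) (whisker_edges V E))"
proof -
  have "Ind (whisker_vertices V) (whisker_edges V E) \<subseteq> Pow (Inl ` V \<union> Inr ` V)"
    using indep_iff by blast
  then show ?thesis using finV by (meson finite_Pow_iff finite_Un finite_imageI finite_subset)
qed

lemma cdim: "complex_dim (Ind (whisker_vertices V) (whisker_edges V E)) = int (card V) - 1"
proof -
  let ?D = "Ind (whisker_vertices V) (whisker_edges V E)"
  have m: "Inr ` V \<in> ?D" using all_inr_facet by (simp add: facets_def)
  have c: "face_dim (Inr ` V :: ('a+'a) set) = int (card V) - 1"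
    by (simp add: face_dim_def card_image)
  have "\<forall>S\<in>?D. face_dim S \<le> int (card V) - 1"
  proof
    fix S assume "S \<in> ?D"
    then have "card S \<le> card V" by (rule face_card)
    then show "face_dim S \<le> int (card V) - 1" by (simp add: face_dim_def)
  qed
  then have le: "Max (face_dim ` ?D) \<le> int (card V) - 1"
    using m finite_Ind by (intro Max.boundedI) auto
  have ge: "int (card V) - 1 \<le> Max (face_dim ` ?D)"
  proof -
    have "face_dim (Inr ` V :: ('a+'a) set) \<in> face_dim ` ?D" by (intro imageI m)
    then have "face_dim (Inr ` V :: ('a+'a) set) \<le> Max (face_dim ` ?D)" by (rule Max_ge[OF finite_imageI[OF finite_Ind]])
    then show ?thesis using c by simp
  qed
  show ?thesis unfolding complex_dim_def using le ge by simp
qed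

lemma codim_facets:
  assumes "\<sigma> \<in> Ind (whisker_vertices V) (whisker_edges V E)" "card \<sigma> + 1 = card V"
    "x \<in> V" "Inl x \<notin> \<sigma>" "Inr x \<notin> \<sigma>"
  shows "{F \<in> facets (Ind (whisker_vertices V) (whisker_edges V E)). \<sigma> \<subseteq> F}
      \<subseteq> {insert (Inl x) \<sigma>, insert (Inr x) \<sigma>}"
proof
  fix F assume F: "F \<in> {F \<in> facets (Ind (whisker_vertices V) (whisker_edges V E)). \<sigma> \<subseteq> F}"
  then have Ff: "F \<in> facets (Ind (whisker_vertices V) (whisker_edges V E))" "\<sigma> \<subseteq> F" by auto
  have cF: "card F = card V" using facet_card Ff by blast
  have "F \<in> Ind (whisker_vertices V) (whisker_edges V E)" using Ff by (simp add: facets_def)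
  then have "F \<subseteq> Inl ` V \<union> Inr ` V" using indep_iff by blast
  then have finF: "finite F" using finV finite_subset by blast
  have fs: "finite \<sigma>" using Ff finF finite_subset by blast
  have "Inl x \<in> F \<or> Inr x \<in> F" using Ff assms(3) facet_iff by blast
  then obtain u where u: "u \<in> F" "u = Inl x \<or> u = Inr x" by blast
  have "insert u \<sigma> \<subseteq> F" using u Ff by blast
  moreover have "card (insert u \<sigma>) = card F" using u assms fs cF by auto
  ultimately have "insert u \<sigma> = F" using finF card_subset_eq by blast
  then show "F \<in> {insert (Inl x) \<sigma>, insert (Inr x) \<sigma>}" using u by blast
qed

lemma missing:
  assumes "\<sigma> \<in> Ind (whisker_vertices V) (whisker_edges V E)" "card \<sigma> + 1 = card V"
  shows "\<exists>x\<in>V. Inl x \<notin> \<sigma> \<and> Inr x \<notin> \<sigma>"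
proof (rule ccontr)
  assume "\<not> ?thesis"
  then have "V \<subseteq> pr ` \<sigma>" by (force simp: pr_def image_iff)
  then have "card V \<le> card (pr ` \<sigma>)"
    using face_inj[OF assms(1)] finV by (meson card_mono finite_subset)
  also have "\<dots> = card \<sigma>" using face_inj[OF assms(1)] card_image by blast
  finally show False using assms(2) by simp
qed

lemma reach_R:
  fixes F
  assumes "F \<in> facets (Ind (whisker_vertices V) (whisker_edges V E))"
  shows "(\<lambda>A B. A \<in> facets (Ind (whisker_vertices V) (whisker_edges V E)) \<and>
                B \<in> facets (Ind (whisker_vertices V) (whisker_edges V E)) \<and>
                card (A \<inter> B) + 1 = card V)\<^sup>*\<^sup>* F (Inr ` V)"
  using assms
proof (induction "card {x\<in>V. Inl x \<in> F}" arbitrary: F rule: less_induct)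
  case less
  let ?D = "Ind (whisker_vertices V) (whisker_edges V E)"
  have Fi: "F \<in> ?D" "\<forall>x\<in>V. Inl x \<in> F \<or> Inr x \<in> F" using less.prems facet_iff by blast+
  have Fs: "F \<subseteq> Inl ` V \<union> Inr ` V" "\<forall>x. \<not>(Inl x \<in> F \<and> Inr x \<in> F)" "\<forall>e\<in>E. \<not> Inl ` e \<subseteq> F"
    using Fi(1) indep_iff by blast+
  show ?case
  proof (cases "{x\<in>V. Inl x \<in> F} = {}")
    case True
    then have "F = Inr ` V" using Fi(2) Fs(1) by blast
    then show ?thesis by simp
  next
    case False
    then obtain a where a: "a \<in> V" "Inl a \<in> F" by blast
    define F' where "F' = insert (Inr a) (F - {Inl a})"
    have F'i: "F' \<in> ?D" unfolding indep_iff F'_def using Fs a by blast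
    have F'f: "F' \<in> facets ?D" unfolding facet_iff using F'i Fi(2) by (auto simp: F'_def)
    have sub: "{x\<in>V. Inl x \<in> F'} = {x\<in>V. Inl x \<in> F} - {a}" by (auto simp: F'_def)
    have "card {x\<in>V. Inl x \<in> F'} < card {x\<in>V. Inl x \<in> F}"
      unfolding sub using a finV by (intro card_Diff1_less) auto
    then have r: "(\<lambda>A B. A \<in> facets ?D \<and> B \<in> facets ?D \<and> card (A \<inter> B) + 1 = card V)\<^sup>*\<^sup>* F' (Inr ` V)"
      using less.hyps F'f by blast
    have "F \<inter> F' = F - {Inl a}" using Fs a by (auto simp: F'_def)
    moreover have "finite F" using finV Fs(1) finite_subset by blast
    moreover have "card V > 0" using a finV card_gt_0_iff by blast
    ultimately have "card (F \<inter> F') + 1 = card V"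
      using a facet_card[OF less.prems] finV card_gt_0_iff[of V] by (simp add: card_Diff_singleton)
    then show ?thesis using r less.prems F'f by (auto intro: converse_rtranclp_into_rtranclp)
  qed
qed

end

theorem theorem3p1:
  fixes V :: "'a set" and E :: "'a set set"
  assumes "simple_graph V E" and "V \<noteq> {}"
  shows "pseudo_manifold (Ind (whisker_vertices V) (whisker_edges V E))
       \<and> complex_dim (Ind (whisker_vertices V) (whisker_edges V E)) = int (card V) - 1
       \<and> (card (whisker_edges V E) \<ge> card V + 1 \<longrightarrow>
            pseudo_manifold_with_boundary (Ind (whisker_vertices V) (whisker_edges V E)))"
proof -
  note sg = assms(1)
  define D where "D = Ind (whisker_vertices V) (whisker_edges V E)"
  define n where "n = card V"
  have fin: "finite V" using finV[OF sg] .
  have n1: "n \<ge> 1" using assms(2) fin by (simp add: n_def Suc_le_eq card_gt_0_iff)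
  have cd: "complex_dim D = int n - 1" using cdim[OF sg] by (simp add: D_def n_def)
  have fc: "\<And>F. F \<in> facets D \<Longrightarrow> card F = n" using facet_card[OF sg] by (simp add: D_def n_def)
  have pure: "pure_complex D" unfolding pure_complex_def face_dim_def using fc by simp
  have dimeq: "\<And>\<sigma>::('a+'a) set. face_dim \<sigma> = complex_dim D - 1 \<longleftrightarrow> card \<sigma> + 1 = n"
    using cd n1 by (auto simp: face_dim_def)
  have c2: "\<forall>\<sigma>\<in>D. face_dim \<sigma> = complex_dim D - 1 \<longrightarrow> card {F \<in> facets D. \<sigma> \<subseteq> F} \<le> 2"
  proof (intro ballI impI)
    fix \<sigma> assume s: "\<sigma> \<in> D" "face_dim \<sigma> = complex_dim D - 1"
    then have cs: "card \<sigma> + 1 = card V" using dimeq n_def by simp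
    obtain x where x: "x \<in> V" "Inl x \<notin> \<sigma>" "Inr x \<notin> \<sigma>"
      using missing[OF sg, of \<sigma>] s(1) cs unfolding D_def by blast
    have sub: "{F \<in> facets D. \<sigma> \<subseteq> F} \<subseteq> {insert (Inl x) \<sigma>, insert (Inr x) \<sigma>}"
      using codim_facets[OF sg, of \<sigma> x] s(1) cs x unfolding D_def by blast
    have "card {F \<in> facets D. \<sigma> \<subseteq> F} \<le> card {insert (Inl x) \<sigma>, insert (Inr x) \<sigma>}"
      by (rule card_mono[OF _ sub]) simp
    also have "\<dots> \<le> 2" by (simp add: card_insert_if)
    finally show "card {F \<in> facets D. \<sigma> \<subseteq> F} \<le> 2" .
  qed
  define adj where "adj = (\<lambda>A B. A \<in> facets D \<and> B \<in> facets D \<and> card (A \<inter> B) + 1 = card V)"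
  have R: "\<And>F. F \<in> facets D \<Longrightarrow> adj\<^sup>*\<^sup>* F (Inr ` V)"
    unfolding adj_def D_def by (rule reach_R[OF sg])
  have adjsym: "\<And>x y. adj x y \<Longrightarrow> adj y x" unfolding adj_def by (auto simp: Int_commute)
  have c3: "\<forall>F\<in>facets D. \<forall>F'\<in>facets D. \<exists>gs. gs \<noteq> [] \<and> hd gs = F \<and> last gs = F' \<and>
        set gs \<subseteq> facets D \<and>
        (\<forall>i. Suc i < length gs \<longrightarrow> face_dim (gs ! i \<inter> gs ! Suc i) = complex_dim D - 1)"
  proof (intro ballI)
    fix F F' assume F: "F \<in> facets D" and F': "F' \<in> facets D"
    have "adj\<^sup>*\<^sup>* F F'" using R[OF F] rtranclp_sym[OF adjsym R[OF F']] by (rule rtranclp_trans)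
    then show "\<exists>gs. gs \<noteq> [] \<and> hd gs = F \<and> last gs = F' \<and>
        set gs \<subseteq> facets D \<and>
        (\<forall>i. Suc i < length gs \<longrightarrow> face_dim (gs ! i \<inter> gs ! Suc i) = complex_dim D - 1)"
      by (rule chain_from_rtranclp[OF _ F']) (simp add: adj_def dimeq n_def)
  qed
  have pm: "pseudo_manifold D" unfolding pseudo_manifold_def Let_def by (intro conjI pure c2 c3)
  have bd: "pseudo_manifold_with_boundary D" if big: "card (whisker_edges V E) \<ge> card V + 1"
  proof -
    have "E \<noteq> {}"
    proof
      assume "E = {}"
      then have "whisker_edges V E = (\<lambda>x. {Inl x, Inr x}) ` V" by (simp add: whisker_edges_def)
      then have "card (whisker_edges V E) \<le> card V" by (simp add: card_image_le fin)
      then show False using big by simp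
    qed
    then obtain e where "e \<in> E" by blast
    then obtain a b where ab: "a \<noteq> b" "a \<in> V" "b \<in> V" "e = {a, b}" using edge[OF sg] by blast
    define \<sigma> where "\<sigma> = insert (Inl b) (Inr ` (V - {a, b}))"
    have noedge: "\<forall>e\<in>E. \<not> Inl ` e \<subseteq> \<sigma>"
    proof
      fix e' assume "e' \<in> E"
      then obtain p q where "p \<noteq> q" "e' = {p, q}" using edge[OF sg] by blast
      then show "\<not> Inl ` e' \<subseteq> \<sigma>" by (auto simp: \<sigma>_def)
    qed
    have "\<sigma> \<subseteq> Inl ` V \<union> Inr ` V" using ab by (auto simp: \<sigma>_def)
    moreover have "\<forall>x. \<not>(Inl x \<in> \<sigma> \<and> Inr x \<in> \<sigma>)" by (auto simp: \<sigma>_def)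
    ultimately have sD: "\<sigma> \<in> D" unfolding D_def using indep_iff[OF sg, of \<sigma>] noedge by blast
    have "card (V - {a, b}) = n - 2" using ab fin by (simp add: n_def card_Diff_subset)
    moreover have "Inl b \<notin> Inr ` (V - {a, b})" by auto
    ultimately have "card \<sigma> = 1 + (n - 2)" using fin
      by (simp add: \<sigma>_def card_image card_insert_if)
    moreover have "n \<ge> 2"
    proof -
      have "{a, b} \<subseteq> V" using ab by simp
      then have "card {a,b} \<le> n" using fin by (simp add: n_def card_mono)
      then show ?thesis using ab by simp
    qed
    ultimately have cs: "card \<sigma> + 1 = n" by simp
    have nL: "Inl a \<notin> \<sigma>" "Inr a \<notin> \<sigma>" using ab by (auto simp: \<sigma>_def)
    have sub: "{F \<in> facets D. \<sigma> \<subseteq> F} \<subseteq> {insert (Inl a) \<sigma>, insert (Inr a) \<sigma>}"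
      using codim_facets[OF sg, of \<sigma> a] sD cs ab(2) nL unfolding D_def n_def by blast
    have "Inl ` e \<subseteq> insert (Inl a) \<sigma>" using ab by (auto simp: \<sigma>_def)
    then have notL: "insert (Inl a) \<sigma> \<notin> D"
      using \<open>e \<in> E\<close> indep_iff[OF sg, of "insert (Inl a) \<sigma>"] unfolding D_def by blast
    have RD: "insert (Inr a) \<sigma> \<in> D"
      using insert_Inr_indep[OF sg, of \<sigma> a] sD ab(2) nL(1) unfolding D_def by blast
    have cov: "\<forall>x\<in>V. Inl x \<in> insert (Inr a) \<sigma> \<or> Inr x \<in> insert (Inr a) \<sigma>"
      by (auto simp: \<sigma>_def)
    have isR: "insert (Inr a) \<sigma> \<in> facets D"
      using facet_iff[OF sg, of "insert (Inr a) \<sigma>"] RD cov unfolding D_def by blast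
    have "{F \<in> facets D. \<sigma> \<subseteq> F} = {insert (Inr a) \<sigma>}"
    proof
      show "{F \<in> facets D. \<sigma> \<subseteq> F} \<subseteq> {insert (Inr a) \<sigma>}"
        using sub notL facets_def[of D] by blast
      show "{insert (Inr a) \<sigma>} \<subseteq> {F \<in> facets D. \<sigma> \<subseteq> F}" using isR by blast
    qed
    then have "card {F \<in> facets D. \<sigma> \<subseteq> F} = 1" by simp
    then show ?thesis unfolding pseudo_manifold_with_boundary_def
      using pm sD cs dimeq by blast
  qed
  show ?thesis using pm cd bd by (simp add: D_def n_def)
qed

end
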